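(* Let $d,s,n$ be positive integers, $f_0^*:\{\pm1\}^s\to\mathbb R$, $S^*\subset[d]$ with $|S^*|=s$, $f^*(\mathbf x)=f_0^*(\mathbf x_{S^*})$, and let $\mathcal D_n=\{(\mathbf X_i,Y_i)\}_{i=1}^n$ with $\mathbf X_i$ i.i.d. uniform on $\{\pm1\}^d$, $Y_i=f^*(\mathbf X_i)+\varepsilon_i$, $\varepsilon_i$ i.i.d. zero-mean independent of the covariates. Let $\hat f$ be a regression tree model fit by a regression tree algorithm $\mathcal A$ with random seed $\Theta$. Then $\mathfrak R(\hat f,f_0^*,d,n)\ge(1-\delta)\operatorname{Var}\{f_0^*(\mathbf X)\}$, where $\delta=\mathbb P\{J(\mathbf X;\mathcal D_n,\Theta)\cap S^*\ne\emptyset\}$ with $\mathbf X$ uniform on $\{\pm1\}^d$ independent of $(\mathcal D_n,\Theta)$.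
   Context: A cell is a subcube $C=\{\mathbf x:x_j=z_j,\ j\in J(C)\}$, split on $k\notin J(C)$ into $C\cap\{x_k=\pm1\}$. A regression tree model is a function constant on each leaf of a binary tree obtained by recursively splitting cells starting from $\{\pm1\}^d$; internal nodes are labeled by their split covariate. A regression tree algorithm maps $(\mathcal D_n,\Theta)$ to such a model, $\Theta$ being random and independent of the data. The query path of $\mathbf x$ is the root-to-leaf path to the leaf containing $\mathbf x$, and $J(\mathbf x;\mathcal D_n,\Theta)$ is the set of split covariates of the nodes on this path. $R(g,f^* )=\mathbb E_{\mathbf X}\{(g(\mathbf X)-f^*(\mathbf X))^2\}$, $\mathfrak R(\hat f,f_0^*,d,n)=\mathbb E_{\mathcal D_n,\Theta}R(\hat f(\cdot;\mathcal D_n,\Theta),f^* )$; $\operatorname{Var}\{f_0^*(\mathbf X)\}$ is the variance under the uniform distribution. *)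

theory Defs
  imports "HOL-Probability.Probability"
begin

text \<open>Points of the hypercube {+-1}^d are encoded as functions nat => bool on the
 coordinates 0..d-1 (True = +1, False = -1), equal to False off {0..<d}.\<close>

definition cube :: "nat \<Rightarrow> (nat \<Rightarrow> bool) set" where
  "cube d = {x. \<forall>i. d \<le> i \<longrightarrow> x i = False}"

text \<open>x_S for S a subset of {0..<d} with |S| = s: the coordinates of x in S, in
 increasing order, as a point of {+-1}^s.\<close>

definition proj :: "nat set \<Rightarrow> nat \<Rightarrow> (nat \<Rightarrow> bool) \<Rightarrow> (nat \<Rightarrow> bool)" where
  "proj S s x = (\<lambda>j. if j < s then x (sorted_list_of_set S ! j) else False)"

text \<open>Binary trees: Node k l r splits on covariate k; l is the cell x_k = -1,
 r is the cell x_k = +1.  Leaves carry the constant value of the model.\<close>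

datatype rtree = Leaf real | Node nat rtree rtree

fun eval_tree :: "rtree \<Rightarrow> (nat \<Rightarrow> bool) \<Rightarrow> real" where
  "eval_tree (Leaf c) x = c"
| "eval_tree (Node k l r) x = (if x k then eval_tree r x else eval_tree l x)"

text \<open>J(x): split covariates of the nodes on the query path of x.\<close>

fun path_vars :: "rtree \<Rightarrow> (nat \<Rightarrow> bool) \<Rightarrow> nat set" where
  "path_vars (Leaf c) x = {}"
| "path_vars (Node k l r) x = insert k (if x k then path_vars r x else path_vars l x)"

text \<open>Tree obtained by recursively splitting cells of {+-1}^d: each split covariate
 lies in [d] and is not among those already fixed by the cell (J(C)).\<close>

fun valid_tree :: "nat \<Rightarrow> nat set \<Rightarrow> rtree \<Rightarrow> bool" where
  "valid_tree d J (Leaf c) = True"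
| "valid_tree d J (Node k l r) =
     (k < d \<and> k \<notin> J \<and> valid_tree d (insert k J) l \<and> valid_tree d (insert k J) r)"

definition regression_tree :: "nat \<Rightarrow> rtree \<Rightarrow> bool" where
  "regression_tree d t = valid_tree d {} t"

definition risk :: "nat \<Rightarrow> ((nat \<Rightarrow> bool) \<Rightarrow> real) \<Rightarrow> ((nat \<Rightarrow> bool) \<Rightarrow> real) \<Rightarrow> real" where
  "risk d g f = measure_pmf.expectation (pmf_of_set (cube d)) (\<lambda>x. (g x - f x)\<^sup>2)"

definition cubeM :: "nat \<Rightarrow> (nat \<Rightarrow> bool) measure" where
  "cubeM d = uniform_count_measure (cube d)"

definition sampleM :: "nat \<Rightarrow> ((nat \<Rightarrow> bool) \<Rightarrow> real) \<Rightarrow> real measure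
     \<Rightarrow> ((nat \<Rightarrow> bool) \<times> real) measure" where
  "sampleM d f N = distr (cubeM d \<Otimes>\<^sub>M N) (count_space UNIV \<Otimes>\<^sub>M borel)
                     (\<lambda>(x, e). (x, f x + e))"

definition dataM :: "nat \<Rightarrow> nat \<Rightarrow> ((nat \<Rightarrow> bool) \<Rightarrow> real) \<Rightarrow> real measure
     \<Rightarrow> (nat \<Rightarrow> (nat \<Rightarrow> bool) \<times> real) measure" where
  "dataM d n f N = PiM {..<n} (\<lambda>_. sampleM d f N)"

end

theory Submission imports Defs begin

lemma finite_cube: "finite (cube n)"
proof -
  have "cube n \<subseteq> (\<lambda>B i. i \<in> B) ` Pow {..<n}"
  proof
    fix x assume "x \<in> cube n"
    hence "x = (\<lambda>i. i \<in> {i. i < n \<and> x i})" unfolding cube_def fun_eq_iff by (metis mem_Collect_eq not_le)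
    thus "x \<in> (\<lambda>B i. i \<in> B) ` Pow {..<n}" by blast
  qed
  thus ?thesis by (rule finite_subset) auto
qed

lemma cube_ne: "cube n \<noteq> {}"
  unfolding cube_def by auto

definition cell :: "nat \<Rightarrow> nat set \<Rightarrow> (nat \<Rightarrow> bool) \<Rightarrow> (nat \<Rightarrow> bool) set" where
  "cell d J z = {x \<in> cube d. \<forall>j\<in>J. x j = z j}"

lemma finite_cell: "finite (cell d J z)"
  unfolding cell_def using finite_cube by auto

lemma sq_ge_var:
  fixes g :: "'a \<Rightarrow> real"
  assumes "finite A" "A \<noteq> {}"
  shows "real (card A) * measure_pmf.variance (pmf_of_set A) g \<le> (\<Sum>y\<in>A. (c - g y)^2)"
proof -
  define m where "m = sum g A / card A"
  have K: "real (card A) > 0" using assms by (simp add: card_gt_0_iff)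
  have V: "measure_pmf.variance (pmf_of_set A) g = (\<Sum>y\<in>A. (g y - m)^2) / card A"
    using assms by (simp add: integral_pmf_of_set m_def)
  have s0: "(\<Sum>y\<in>A. (m - g y)) = 0"
    using K by (simp add: sum_subtractf m_def)
  have "(\<Sum>y\<in>A. (c - g y)^2) = (\<Sum>y\<in>A. (c - m)^2 + 2*(c-m)*(m - g y) + (g y - m)^2)"
    by (rule sum.cong) (auto simp: power2_eq_square algebra_simps)
  also have "\<dots> = card A * (c-m)^2 + 2*(c-m)*(\<Sum>y\<in>A. (m - g y)) + (\<Sum>y\<in>A. (g y - m)^2)"
    by (simp add: sum.distrib sum_distrib_left)
  finally have "(\<Sum>y\<in>A. (c - g y)^2) = card A * (c-m)^2 + (\<Sum>y\<in>A. (g y - m)^2)"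
    using s0 by simp
  moreover have "real (card A) * measure_pmf.variance (pmf_of_set A) g = (\<Sum>y\<in>A. (g y - m)^2)"
    using V K by simp
  ultimately show ?thesis by simp
qed

lemma fiber_card:
  assumes S: "S \<subseteq> {..<d}" "card S = s" and JS: "J \<inter> S = {}" and y: "y \<in> cube s"
  shows "card {x \<in> cell d J z. proj S s x = y} = card {w \<in> cell d J z. \<forall>j\<in>S. w j = False}"
proof -
  define L where "L = sorted_list_of_set S"
  have fS: "finite S" by (rule finite_subset[OF S(1)]) simp
  have L: "distinct L" "set L = S" "length L = s" using fS S by (auto simp: L_def)
  define index where "index = (\<lambda>L::nat list. the_inv_into {..<length L} (nth L))"
  have inj: "inj_on (nth L) {..<length L}" using L(1) by (simp add: inj_on_def nth_eq_iff_index_eq)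
  have img: "nth L ` {..<length L} = S" using L(2) by (auto simp: in_set_conv_nth)
  have index_less_size_conv: "index L j < s" if "j \<in> S" for j
  proof -
    have "j \<in> nth L ` {..<length L}" using img that by simp
    hence "the_inv_into {..<length L} (nth L) j \<in> {..<length L}" by (rule the_inv_into_into[OF inj]) simp
    thus ?thesis using L(3) unfolding index_def by simp
  qed
  have index_nth_id: "index L (L ! j) = j" if "j < s" for j
  proof -
    have "j \<in> {..<length L}" using that L(3) by simp
    thus ?thesis unfolding index_def by (rule the_inv_into_f_f[OF inj])
  qed
  have nth_index: "L ! (index L j) = j" if "j \<in> S" for j
  proof -
    have "j \<in> nth L ` {..<length L}" using img that by simp
    thus ?thesis unfolding index_def by (rule f_the_inv_into_f[OF inj])
  qed
  define mg where "mg = (\<lambda>w j. if j \<in> S then y (index L j) else w j)"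
  have "bij_betw mg {w \<in> cell d J z. \<forall>j\<in>S. w j = False} {x \<in> cell d J z. proj S s x = y}"
  proof (rule bij_betw_byWitness[where f' = "\<lambda>x j. if j \<in> S then False else x j"])
    show "\<forall>a\<in>{w \<in> cell d J z. \<forall>j\<in>S. w j = False}. (\<lambda>x j. if j \<in> S then False else x j) (mg a) = a"
      by (auto simp: mg_def fun_eq_iff)
    show "\<forall>a'\<in>{x \<in> cell d J z. proj S s x = y}. mg (\<lambda>j. if j \<in> S then False else a' j) = a'"
    proof
      fix x assume x: "x \<in> {x \<in> cell d J z. proj S s x = y}"
      { fix j assume j: "j \<in> S"
        have i: "index L j < s" using j by (rule index_less_size_conv)
        have "y (index L j) = proj S s x (index L j)" using x by simp
        also have "\<dots> = x (L ! index L j)" using i unfolding proj_def L_def by simp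
        also have "\<dots> = x j" using nth_index[OF j] by simp
        finally have "y (index L j) = x j" . }
      thus "mg (\<lambda>j. if j \<in> S then False else x j) = x" by (auto simp: mg_def fun_eq_iff)
    qed
    show "mg ` {w \<in> cell d J z. \<forall>j\<in>S. w j = False} \<subseteq> {x \<in> cell d J z. proj S s x = y}"
    proof safe
      fix w assume w: "w \<in> cell d J z" "\<forall>j\<in>S. w j = False"
      show "mg w \<in> cell d J z" using w S JS unfolding cell_def cube_def mg_def by auto
      show "proj S s (mg w) = y"
      proof
        fix j show "proj S s (mg w) j = y j"
        proof (cases "j < s")
          case True
          hence "L ! j \<in> S" using L by (metis nth_mem)
          hence "proj S s (mg w) j = y (index L (L ! j))" using True unfolding proj_def mg_def L_def by simp
          thus ?thesis using index_nth_id[OF True] by simp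
        next
          case False thus ?thesis using y unfolding proj_def cube_def by auto
        qed
      qed
    qed
    show "(\<lambda>x j. if j \<in> S then False else x j) ` {x \<in> cell d J z. proj S s x = y}
          \<subseteq> {w \<in> cell d J z. \<forall>j\<in>S. w j = False}"
      using JS unfolding cell_def cube_def by auto
  qed
  from bij_betw_same_card[OF this] show ?thesis by simp
qed

lemma proj_cube: "proj S s x \<in> cube s"
  unfolding proj_def cube_def by auto

lemma leaf_bound:
  assumes S: "S \<subseteq> {..<d}" "card S = s" and JS: "J \<inter> S = {}"
  shows "real (card (cell d J z)) * measure_pmf.variance (pmf_of_set (cube s)) f0
         \<le> (\<Sum>x\<in>cell d J z. (c - f0 (proj S s x))^2)"
proof -
  define C where "C = cell d J z"
  define m where "m = card {w \<in> C. \<forall>j\<in>S. w j = False}"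
  define V where "V = measure_pmf.variance (pmf_of_set (cube s)) f0"
  have fC: "finite C" unfolding C_def by (rule finite_cell)
  have im: "proj S s ` C \<subseteq> cube s" using proj_cube by blast
  have fib: "card {x \<in> C. proj S s x = y} = m" if "y \<in> cube s" for y
    using fiber_card[OF S JS that] unfolding C_def m_def by simp
  have gen: "(\<Sum>x\<in>C. h (proj S s x)) = real m * (\<Sum>y\<in>cube s. h y)" for h :: "_ \<Rightarrow> real"
  proof -
    have "(\<Sum>x\<in>C. h (proj S s x)) = (\<Sum>y\<in>cube s. \<Sum>x\<in>{x \<in> C. proj S s x = y}. h (proj S s x))"
      by (rule sum.group[OF fC finite_cube im, symmetric])
    also have "\<dots> = (\<Sum>y\<in>cube s. \<Sum>x\<in>{x \<in> C. proj S s x = y}. h y)"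
      by (rule sum.cong) auto
    also have "\<dots> = (\<Sum>y\<in>cube s. real m * h y)"
      by (rule sum.cong) (auto simp: fib)
    finally show ?thesis by (simp add: sum_distrib_left)
  qed
  have cC: "real (card C) = real m * real (card (cube s))"
    using gen[of "\<lambda>_. 1"] by simp
  have "real (card (cube s)) * V \<le> (\<Sum>y\<in>cube s. (c - f0 y)^2)"
    unfolding V_def by (rule sq_ge_var[OF finite_cube cube_ne])
  hence "real m * (real (card (cube s)) * V) \<le> real m * (\<Sum>y\<in>cube s. (c - f0 y)^2)"
    by (rule mult_left_mono) simp
  thus ?thesis using gen[of "\<lambda>y. (c - f0 y)^2"] cC unfolding C_def[symmetric] V_def[symmetric]
    by (simp add: mult.assoc)
qed

lemma tree_bound:
  assumes S: "S \<subseteq> {..<d}" "card S = s"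
  shows "valid_tree d J t \<Longrightarrow>
    measure_pmf.variance (pmf_of_set (cube s)) f0 * real (card {x \<in> cell d J z. (J \<union> path_vars t x) \<inter> S = {}})
      \<le> (\<Sum>x\<in>cell d J z. (eval_tree t x - f0 (proj S s x))^2)"
proof (induction t arbitrary: J z)
  case (Leaf c)
  show ?case
  proof (cases "J \<inter> S = {}")
    case True
    hence e: "{x \<in> cell d J z. (J \<union> path_vars (Leaf c) x) \<inter> S = {}} = cell d J z" by auto
    show ?thesis unfolding e using leaf_bound[OF S True, of z f0 c] by (simp add: mult.commute)
  next
    case False
    hence e: "{x \<in> cell d J z. (J \<union> path_vars (Leaf c) x) \<inter> S = {}} = {}" by auto
    show ?thesis unfolding e by (simp add: sum_nonneg)
  qed
next
  case (Node k l r)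
  define V where "V = measure_pmf.variance (pmf_of_set (cube s)) f0"
  have kJ: "k \<notin> J" and vl: "valid_tree d (insert k J) l" and vr: "valid_tree d (insert k J) r"
    using Node.prems by auto
  define C where "C = cell d J z"
  define C1 where "C1 = cell d (insert k J) (z(k:=True))"
  define C0 where "C0 = cell d (insert k J) (z(k:=False))"
  have C1: "C1 = {x \<in> C. x k}" using kJ unfolding C1_def C_def cell_def by auto
  have C0: "C0 = {x \<in> C. \<not> x k}" using kJ unfolding C0_def C_def cell_def by auto
  have fC: "finite C" unfolding C_def by (rule finite_cell)
  have CU: "C = C1 \<union> C0" and dis: "C1 \<inter> C0 = {}" using C1 C0 by auto
  have f1: "finite C1" "finite C0" using CU fC by auto
  define g where "g = (\<lambda>x. (eval_tree (Node k l r) x - f0 (proj S s x))^2)"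
  have sumsplit: "(\<Sum>x\<in>C. g x) = (\<Sum>x\<in>C1. (eval_tree r x - f0 (proj S s x))^2)
        + (\<Sum>x\<in>C0. (eval_tree l x - f0 (proj S s x))^2)"
  proof -
    have "(\<Sum>x\<in>C. g x) = (\<Sum>x\<in>C1. g x) + (\<Sum>x\<in>C0. g x)"
      unfolding CU by (rule sum.union_disjoint[OF f1 dis])
    moreover have "(\<Sum>x\<in>C1. g x) = (\<Sum>x\<in>C1. (eval_tree r x - f0 (proj S s x))^2)"
      by (rule sum.cong) (auto simp: C1 g_def)
    moreover have "(\<Sum>x\<in>C0. g x) = (\<Sum>x\<in>C0. (eval_tree l x - f0 (proj S s x))^2)"
      by (rule sum.cong) (auto simp: C0 g_def)
    ultimately show ?thesis by simp
  qed
  define P where "P = {x \<in> C. (J \<union> path_vars (Node k l r) x) \<inter> S = {}}"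
  define P1 where "P1 = {x \<in> C1. (insert k J \<union> path_vars r x) \<inter> S = {}}"
  define P0 where "P0 = {x \<in> C0. (insert k J \<union> path_vars l x) \<inter> S = {}}"
  have PU: "P = P1 \<union> P0" unfolding P_def P1_def P0_def C1 C0 by auto
  have Pdis: "P1 \<inter> P0 = {}" unfolding P1_def P0_def C1 C0 by auto
  have fP: "finite P1" "finite P0" unfolding P1_def P0_def using f1 by auto
  have cP: "card P = card P1 + card P0" unfolding PU by (rule card_Un_disjoint[OF fP Pdis])
  have "V * card P1 \<le> (\<Sum>x\<in>C1. (eval_tree r x - f0 (proj S s x))^2)"
    using Node.IH(2)[OF vr, of "z(k:=True)"] unfolding V_def P1_def C1_def .
  moreover have "V * card P0 \<le> (\<Sum>x\<in>C0. (eval_tree l x - f0 (proj S s x))^2)"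
    using Node.IH(1)[OF vl, of "z(k:=False)"] unfolding V_def P0_def C0_def .
  ultimately have "V * card P \<le> (\<Sum>x\<in>C. g x)"
    using sumsplit cP by (simp add: distrib_left)
  thus ?case unfolding V_def P_def C_def g_def .
qed

lemma cell_empty: "cell d {} z = cube d"
  unfolding cell_def by simp

lemma var_nonneg: "0 \<le> measure_pmf.variance (pmf_of_set (cube s)) (f0 :: _ \<Rightarrow> real)"
  by simp

lemma risk_bound:
  assumes S: "S \<subseteq> {..<d}" "card S = s" and t: "regression_tree d t"
  shows "measure_pmf.variance (pmf_of_set (cube s)) f0 *
           (1 - real (card {x \<in> cube d. path_vars t x \<inter> S \<noteq> {}}) / real (card (cube d)))
         \<le> risk d (eval_tree t) (\<lambda>x. f0 (proj S s x))"
proof -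
  define V where "V = measure_pmf.variance (pmf_of_set (cube s)) f0"
  define K where "K = real (card (cube d))"
  have K: "K > 0" unfolding K_def using finite_cube cube_ne by (simp add: card_gt_0_iff)
  have "V * real (card {x \<in> cell d {} z. ({} \<union> path_vars t x) \<inter> S = {}})
      \<le> (\<Sum>x\<in>cell d {} z. (eval_tree t x - f0 (proj S s x))^2)"
    using tree_bound[OF S, of "{}" t f0 z] t unfolding regression_tree_def V_def by simp
  hence b: "V * real (card {x \<in> cube d. path_vars t x \<inter> S = {}}) \<le> (\<Sum>x\<in>cube d. (eval_tree t x - f0 (proj S s x))^2)"
    unfolding cell_empty by simp
  have cu: "cube d = {x \<in> cube d. path_vars t x \<inter> S = {}} \<union> {x \<in> cube d. path_vars t x \<inter> S \<noteq> {}}" by auto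
  have "card (cube d) = card {x \<in> cube d. path_vars t x \<inter> S = {}} + card {x \<in> cube d. path_vars t x \<inter> S \<noteq> {}}"
    by (subst cu, rule card_Un_disjoint) (use finite_cube in auto)
  hence c: "real (card {x \<in> cube d. path_vars t x \<inter> S = {}}) = K - real (card {x \<in> cube d. path_vars t x \<inter> S \<noteq> {}})"
    unfolding K_def by simp
  have r: "risk d (eval_tree t) (\<lambda>x. f0 (proj S s x)) = (\<Sum>x\<in>cube d. (eval_tree t x - f0 (proj S s x))^2) / K"
    unfolding risk_def K_def using finite_cube cube_ne by (simp add: integral_pmf_of_set)
  have "V * (1 - real (card {x \<in> cube d. path_vars t x \<inter> S \<noteq> {}}) / K)
      = V * real (card {x \<in> cube d. path_vars t x \<inter> S = {}}) / K"
    using K unfolding c by (simp add: field_simps)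
  also have "\<dots> \<le> risk d (eval_tree t) (\<lambda>x. f0 (proj S s x))"
    unfolding r using K b by (simp add: divide_right_mono)
  finally show ?thesis unfolding V_def K_def .
qed

lemma prob_space_pair':
  assumes "prob_space M1" "prob_space M2" shows "prob_space (M1 \<Otimes>\<^sub>M M2)"
proof -
  interpret pair_prob_space M1 M2
    using assms by (simp add: pair_prob_space_def pair_sigma_finite_def prob_space_imp_sigma_finite)
  show ?thesis by (rule P.prob_space_axioms)
qed

lemma prob_cubeM: "prob_space (cubeM d)"
  unfolding cubeM_def by (rule prob_space_uniform_count_measure[OF finite_cube cube_ne])

lemma cubeM_meas:
  assumes "\<And>x. x \<in> cube d \<Longrightarrow> g x \<in> space M'"
  shows "g \<in> measurable (cubeM d) M'"
proof -
  have "sets (cubeM d) = sets (count_space (cube d))"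
    unfolding cubeM_def by (simp add: sets_uniform_count_measure)
  moreover have "g \<in> measurable (count_space (cube d)) M'" using assms by auto
  ultimately show ?thesis using measurable_cong_sets by blast
qed

lemma prob_dataM:
  assumes "prob_space N" and sN: "sets N = sets borel"
  shows "prob_space (dataM d n f N)"
  unfolding dataM_def
proof (rule prob_space_PiM)
  fix i
  have ps: "prob_space (cubeM d \<Otimes>\<^sub>M N)" by (rule prob_space_pair'[OF prob_cubeM assms(1)])
  have m: "(\<lambda>z. (fst z, f (fst z) + snd z)) \<in> measurable (cubeM d \<Otimes>\<^sub>M N) (count_space UNIV \<Otimes>\<^sub>M borel)"
  proof (rule measurable_Pair)
    show "(\<lambda>z. fst z) \<in> measurable (cubeM d \<Otimes>\<^sub>M N) (count_space UNIV)"
      by (rule measurable_compose[OF measurable_fst cubeM_meas]) simp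
    have "(\<lambda>z. f (fst z)) \<in> borel_measurable (cubeM d \<Otimes>\<^sub>M N)"
      by (rule measurable_compose[OF measurable_fst cubeM_meas]) simp
    moreover have "snd \<in> borel_measurable (cubeM d \<Otimes>\<^sub>M N)"
      using measurable_snd[of "cubeM d" N] measurable_cong_sets[OF refl sN] by blast
    ultimately show "(\<lambda>z. f (fst z) + snd z) \<in> borel_measurable (cubeM d \<Otimes>\<^sub>M N)"
      by (rule borel_measurable_add)
  qed
  show "prob_space (sampleM d f N)"
    unfolding sampleM_def case_prod_beta by (rule prob_space.prob_space_distr[OF ps m])
qed

lemma main_gen:
  fixes f0 :: "(nat \<Rightarrow> bool) \<Rightarrow> real"
    and M :: "('a1 \<times> 'a2) measure"
    and A :: "'a1 \<Rightarrow> 'a2 \<Rightarrow> rtree"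
  assumes S: "S \<subseteq> {..<d}" "card S = s"
    and psM: "prob_space M"
    and a11: "\<forall>D \<theta>. regression_tree d (A D \<theta>)"
    and a13: "\<forall>x. (\<lambda>p. path_vars (A (fst p) (snd p)) x) \<in> measurable M (count_space UNIV)"
  shows "(\<integral>\<^sup>+ p. ennreal (risk d (eval_tree (A (fst p) (snd p))) (\<lambda>x. f0 (proj S s x))) \<partial>M)
         \<ge> ennreal ((1 - measure (M \<Otimes>\<^sub>M cubeM d)
                              {((D, \<theta>), x) \<in> space (M \<Otimes>\<^sub>M cubeM d).
                                  path_vars (A D \<theta>) x \<inter> S \<noteq> {}})
                    * measure_pmf.variance (pmf_of_set (cube s)) f0)"
proof -
  interpret M: prob_space M by (rule psM)
  define C where "C = cubeM d"
  interpret C: prob_space C unfolding C_def by (rule prob_cubeM)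
  have spC: "space C = cube d" and sC: "sets C = Pow (cube d)"
    unfolding C_def cubeM_def by (simp_all add: space_uniform_count_measure sets_uniform_count_measure)
  define V where "V = measure_pmf.variance (pmf_of_set (cube s)) f0"
  have V0: "0 \<le> V" unfolding V_def by (rule var_nonneg)
  define K where "K = real (card (cube d))"
  have K: "K > 0" unfolding K_def using finite_cube cube_ne by (simp add: card_gt_0_iff)
  define B where "B p = {x \<in> cube d. path_vars (A (fst p) (snd p)) x \<inter> S \<noteq> {}}" for p
  define Pn where "Pn p = real (card (B p)) / K" for p
  have ind_meas: "(\<lambda>p. if path_vars (A (fst p) (snd p)) x \<inter> S \<noteq> {} then 1 else 0 :: real) \<in> borel_measurable M" for x
    using measurable_compose[OF a13[rule_format, of x], of "\<lambda>P. if P \<inter> S \<noteq> {} then 1 else 0 :: real" borel]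
    by simp
  have Pn_sum: "Pn p = (\<Sum>x\<in>cube d. if path_vars (A (fst p) (snd p)) x \<inter> S \<noteq> {} then 1 else 0) / K" for p
  proof -
    have "real (card (B p)) = (\<Sum>x\<in>B p. (1::real))" by simp
    also have "\<dots> = (\<Sum>x\<in>cube d. if path_vars (A (fst p) (snd p)) x \<inter> S \<noteq> {} then 1 else 0)"
      unfolding B_def by (rule sum.inter_filter[OF finite_cube])
    finally show ?thesis unfolding Pn_def by simp
  qed
  have Pn_meas: "Pn \<in> borel_measurable M"
    unfolding Pn_sum[abs_def] using ind_meas by measurable
  have Pn01: "0 \<le> Pn p" "Pn p \<le> 1" for p
  proof -
    have "card (B p) \<le> card (cube d)" unfolding B_def by (rule card_mono[OF finite_cube]) auto
    thus "0 \<le> Pn p" "Pn p \<le> 1" unfolding Pn_def using K K_def by auto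
  qed
  have Pn_int: "integrable M Pn"
    by (rule M.integrable_const_bound[where B=1]) (use Pn01 Pn_meas in auto)
  define E where "E = {((D, \<theta>), x) \<in> space (M \<Otimes>\<^sub>M C). path_vars (A D \<theta>) x \<inter> S \<noteq> {}}"
  have E_eq: "E = (\<Union>x\<in>cube d. {p \<in> space M. path_vars (A (fst p) (snd p)) x \<inter> S \<noteq> {}} \<times> {x})"
    unfolding E_def space_pair_measure spC by auto
  have E_sets: "E \<in> sets (M \<Otimes>\<^sub>M C)"
  proof -
    have "{p \<in> space M. path_vars (A (fst p) (snd p)) x \<inter> S \<noteq> {}} \<in> sets M" for x
    proof -
      have "(\<lambda>p. path_vars (A (fst p) (snd p)) x) -` {P. P \<inter> S \<noteq> {}} \<inter> space M \<in> sets M"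
        by (rule measurable_sets[OF a13[rule_format]]) simp
      moreover have "(\<lambda>p. path_vars (A (fst p) (snd p)) x) -` {P. P \<inter> S \<noteq> {}} \<inter> space M
          = {p \<in> space M. path_vars (A (fst p) (snd p)) x \<inter> S \<noteq> {}}" by auto
      ultimately show ?thesis by simp
    qed
    moreover have "{x} \<in> sets C" if "x \<in> cube d" for x using that sC by auto
    ultimately show ?thesis unfolding E_eq by (intro sets.finite_UN finite_cube pair_measureI) auto
  qed
  have slice: "Pair p -` E = B p" if "p \<in> space M" for p
    using that unfolding E_def B_def space_pair_measure spC by auto
  have "emeasure (M \<Otimes>\<^sub>M C) E = (\<integral>\<^sup>+ p. emeasure C (Pair p -` E) \<partial>M)"
    by (rule C.emeasure_pair_measure_alt[OF E_sets])
  also have "\<dots> = (\<integral>\<^sup>+ p. ennreal (Pn p) \<partial>M)"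
  proof (rule nn_integral_cong)
    fix p assume p: "p \<in> space M"
    have "B p \<subseteq> cube d" unfolding B_def by auto
    hence "measure C (B p) = Pn p" unfolding C_def cubeM_def Pn_def K_def
      by (simp add: measure_uniform_count_measure[OF finite_cube])
    thus "emeasure C (Pair p -` E) = ennreal (Pn p)" using slice[OF p] C.emeasure_eq_measure by simp
  qed
  also have "\<dots> = ennreal (integral\<^sup>L M Pn)"
    by (rule nn_integral_eq_integral[OF Pn_int]) (use Pn01 in auto)
  finally have emE: "emeasure (M \<Otimes>\<^sub>M C) E = ennreal (integral\<^sup>L M Pn)" .
  have delta: "measure (M \<Otimes>\<^sub>M C) E = integral\<^sup>L M Pn"
    unfolding measure_def emE using Pn01 by (simp add: Bochner_Integration.integral_nonneg)
  have "ennreal ((1 - integral\<^sup>L M Pn) * V) = ennreal (integral\<^sup>L M (\<lambda>p. V * (1 - Pn p)))"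
    using Pn_int by (simp add: Bochner_Integration.integral_diff mult.commute M.prob_space)
  also have "\<dots> = (\<integral>\<^sup>+ p. ennreal (V * (1 - Pn p)) \<partial>M)"
    by (rule nn_integral_eq_integral[symmetric]) (use Pn_int Pn01 V0 in auto)
  also have "\<dots> \<le> (\<integral>\<^sup>+ p. ennreal (risk d (eval_tree (A (fst p) (snd p))) (\<lambda>x. f0 (proj S s x))) \<partial>M)"
  proof (rule nn_integral_mono)
    fix p
    show "ennreal (V * (1 - Pn p)) \<le> ennreal (risk d (eval_tree (A (fst p) (snd p))) (\<lambda>x. f0 (proj S s x)))"
      using risk_bound[OF S, of "A (fst p) (snd p)" f0] a11 unfolding V_def Pn_def B_def K_def
      by (intro ennreal_leI) auto
  qed
  finally show ?thesis using delta unfolding E_def C_def V_def by simp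
qed

theorem lemma3:
  fixes d s n :: nat
    and f0 :: "(nat \<Rightarrow> bool) \<Rightarrow> real"
    and S :: "nat set"
    and N :: "real measure"
    and Q :: "'th measure"
    and A :: "(nat \<Rightarrow> (nat \<Rightarrow> bool) \<times> real) \<Rightarrow> 'th \<Rightarrow> rtree"
  assumes "0 < d" and "0 < s" and "0 < n"
    and "S \<subseteq> {..<d}" and "card S = s"
    and "prob_space N" and "sets N = sets borel"
    and "integrable N (\<lambda>e. e)" and "(\<integral>e. e \<partial>N) = 0"
    and "prob_space Q"
    and "\<forall>D \<theta>. regression_tree d (A D \<theta>)"
    and "\<forall>x. (\<lambda>p. eval_tree (A (fst p) (snd p)) x)
               \<in> borel_measurable (dataM d n (\<lambda>x. f0 (proj S s x)) N \<Otimes>\<^sub>M Q)"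
    and "\<forall>x. (\<lambda>p. path_vars (A (fst p) (snd p)) x)
               \<in> measurable (dataM d n (\<lambda>x. f0 (proj S s x)) N \<Otimes>\<^sub>M Q) (count_space UNIV)"
  shows "(\<integral>\<^sup>+ p. ennreal (risk d (eval_tree (A (fst p) (snd p))) (\<lambda>x. f0 (proj S s x)))
             \<partial>(dataM d n (\<lambda>x. f0 (proj S s x)) N \<Otimes>\<^sub>M Q))
         \<ge> ennreal ((1 - measure ((dataM d n (\<lambda>x. f0 (proj S s x)) N \<Otimes>\<^sub>M Q) \<Otimes>\<^sub>M cubeM d)
                              {((D, \<theta>), x) \<in> space ((dataM d n (\<lambda>x. f0 (proj S s x)) N \<Otimes>\<^sub>M Q) \<Otimes>\<^sub>M cubeM d).
                                  path_vars (A D \<theta>) x \<inter> S \<noteq> {}})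
                    * measure_pmf.variance (pmf_of_set (cube s)) f0)"
proof (rule main_gen[OF assms(4,5)])
  show "prob_space (dataM d n (\<lambda>x. f0 (proj S s x)) N \<Otimes>\<^sub>M Q)"
    by (rule prob_space_pair'[OF prob_dataM[OF assms(6,7)] assms(10)])
qed (use assms(11,13) in auto)

end
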